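(* With $P(X)=\prod_{i=1}^n(X-x_i)=\sum_{i=0}^n a_iX^i$ ($a_n=1$), set $a_i=0$ for $i>n$ and $\alpha_{i,j}=(i+1)a_{i+1}a_j$. Then, as polynomial identities in $X,Y$, $$\Gamma_{\mathbb E}\big(P(X),P(Y)\big)=\sum_{i,j}\Gamma_{\mathbb E}(a_i,a_j)X^iY^j=\frac{P'(X)P(Y)-P'(Y)P(X)}{Y-X}=\sum_{i\ne j}\alpha_{i,j}\,\frac{X^iY^j-X^jY^i}{Y-X}.$$ Moreover, the functions $G^{kp}=\Gamma_{\mathbb E}(a_k,a_p)$ ($0\le k,p\le n-1$) are polynomials in $(a_0,\dots,a_{n-1})$, and regarding them as such, for every $p\in\{0,\dots,n-1\}$, $$\sum_{k=0}^{n-1}\partial_{a_k}\Gamma_{\mathbb E}(a_k,a_p)=-\tfrac12(p+1)(p+2)\,a_{p+2}.$$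
   Context: $\Gamma_{\mathbb E}(f,g)=\sum_i\partial_{x_i}f\,\partial_{x_i}g$ is the Euclidean carré du champ on $\mathbb{R}^n$; the $a_i$ are functions of $x=(x_1,\dots,x_n)$. *)

theory Defs
  imports "HOL-Analysis.Analysis" "HOL-Computational_Algebra.Polynomial"
begin

text \<open>Points of R^n are represented as functions nat => real; only the
  coordinates 0..n-1 are used.\<close>

definition pdiff :: "((nat \<Rightarrow> real) \<Rightarrow> real) \<Rightarrow> nat \<Rightarrow> (nat \<Rightarrow> real) \<Rightarrow> real" where
  "pdiff f k y = deriv (\<lambda>t. f (y(k := t))) (y k)"

definition GammaE :: "nat \<Rightarrow> ((nat \<Rightarrow> real) \<Rightarrow> real) \<Rightarrow> ((nat \<Rightarrow> real) \<Rightarrow> real)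
    \<Rightarrow> (nat \<Rightarrow> real) \<Rightarrow> real" where
  "GammaE n f g x = (\<Sum>k<n. pdiff f k x * pdiff g k x)"

definition rootpoly :: "nat \<Rightarrow> (nat \<Rightarrow> real) \<Rightarrow> real poly" where
  "rootpoly n x = (\<Prod>i<n. [:- x i, 1:])"

text \<open>The coefficient functions a_i (automatically 0 for i > n).\<close>
definition acoef :: "nat \<Rightarrow> nat \<Rightarrow> (nat \<Rightarrow> real) \<Rightarrow> real" where
  "acoef n i x = coeff (rootpoly n x) i"

definition alpha :: "nat \<Rightarrow> nat \<Rightarrow> nat \<Rightarrow> (nat \<Rightarrow> real) \<Rightarrow> real" where
  "alpha n i j x = real (i + 1) * acoef n (i + 1) x * acoef n j x"

definition mpoly_fun :: "nat \<Rightarrow> ((nat \<Rightarrow> real) \<Rightarrow> real) \<Rightarrow> bool" where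
  "mpoly_fun n Q \<longleftrightarrow> (\<exists>S c. finite S \<and>
     (\<forall>y. Q y = (\<Sum>e\<in>S. c e * (\<Prod>i<n. y i ^ e i))))"

definition avec :: "nat \<Rightarrow> (nat \<Rightarrow> real) \<Rightarrow> nat \<Rightarrow> real" where
  "avec n x = (\<lambda>i. if i < n then acoef n i x else 0)"

end

theory Submission
  imports Defs
begin


definition Dp :: "nat \<Rightarrow> nat \<Rightarrow> (nat\<Rightarrow>real) \<Rightarrow> real poly" where
  "Dp n k x = (\<Prod>i\<in>{..<n}-{k}. [:- x i, 1:])"

lemma rp_split: "k < n \<Longrightarrow> rootpoly n x = [:-x k,1:] * Dp n k x"
  unfolding rootpoly_def Dp_def by (simp add: prod.remove)

lemma Dp_upd: "Dp n k (x(k:=t)) = Dp n k x"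
  unfolding Dp_def by (rule prod.cong) auto

lemma rp_upd: "k < n \<Longrightarrow> rootpoly n (x(k:=t)) = [:-t,1:] * Dp n k x"
  using rp_split[of k n "x(k:=t)"] Dp_upd by simp

lemma deg_Dp: "degree (Dp n k x) \<le> n"
proof -
  have "degree (Dp n k x) \<le> (\<Sum>i\<in>{..<n}-{k}. degree [:- x i, 1:])"
    unfolding Dp_def using degree_prod_sum_le[of "{..<n}-{k}" "\<lambda>i. [:- x i, 1:]"] by (simp add: o_def)
  also have "\<dots> = card ({..<n}-{k})" by simp
  also have "\<dots> \<le> n" by (metis card_Diff1_le card_lessThan finite_lessThan card_Diff_subset le_trans order_refl)
  finally show ?thesis .
qed

lemma rp_Suc: "rootpoly (Suc n) x = rootpoly n x * [:-x n,1:]"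
  unfolding rootpoly_def by simp

lemma rp_deg_coeff: "degree (rootpoly n x) = n \<and> coeff (rootpoly n x) n = 1"
proof (induction n)
  case 0 then show ?case by (simp add: rootpoly_def)
next
  case (Suc n)
  have nz: "rootpoly n x \<noteq> 0" using Suc by auto
  have d: "degree (rootpoly (Suc n) x) = Suc n"
    unfolding rp_Suc using nz Suc degree_mult_eq[of "rootpoly n x" "[:-x n,1:]"] by (simp del: mult_pCons_right mult_pCons_left)
  have "coeff (rootpoly (Suc n) x) (Suc n) = coeff (rootpoly n x) (degree (rootpoly n x)) * coeff [:-x n,1:] (degree [:-x n,1:])"
    unfolding rp_Suc using Suc coeff_mult_degree_sum[of "rootpoly n x" "[:-x n,1:]"] by simp
  then show ?case using d Suc by simp
qed

lemma acoef_n: "acoef n n x = 1" using rp_deg_coeff by (simp add: acoef_def)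
lemma acoef_gt: "i > n \<Longrightarrow> acoef n i x = 0"
  using rp_deg_coeff[of n x] by (simp add: acoef_def coeff_eq_0)

lemma pdiff_polyP: "k < n \<Longrightarrow> pdiff (\<lambda>x. poly (rootpoly n x) X) k x = - poly (Dp n k x) X"
proof -
  assume k: "k < n"
  have "(\<lambda>t. poly (rootpoly n (x(k:=t))) X) = (\<lambda>t. (X - t) * poly (Dp n k x) X)"
    by (rule ext, simp only: rp_upd[OF k] poly_mult) (simp add: algebra_simps)
  moreover have "((\<lambda>t. (X - t) * poly (Dp n k x) X) has_real_derivative - poly (Dp n k x) X) (at (x k))"
    by (auto intro!: derivative_eq_intros)
  ultimately show ?thesis unfolding pdiff_def by (simp add: DERIV_imp_deriv)
qed

lemma pdiff_acoef: "k < n \<Longrightarrow> pdiff (acoef n i) k x = - coeff (Dp n k x) i"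
proof -
  assume k: "k < n"
  have "(\<lambda>t. acoef n i (x(k:=t))) = (\<lambda>t. coeff (pCons 0 (Dp n k x)) i - t * coeff (Dp n k x) i)"
    using rp_upd[OF k] by (auto simp: fun_eq_iff acoef_def mult_pCons_left)
  moreover have "((\<lambda>t. coeff (pCons 0 (Dp n k x)) i - t * coeff (Dp n k x) i) has_real_derivative - coeff (Dp n k x) i) (at (x k))"
    by (auto intro!: derivative_eq_intros)
  ultimately show ?thesis unfolding pdiff_def by (simp add: DERIV_imp_deriv)
qed



lemma poly_sum_le: "degree (p::real poly) \<le> N \<Longrightarrow> poly p X = (\<Sum>i\<le>N. coeff p i * X^i)"
proof -
  assume d: "degree p \<le> N"
  have "poly p X = (\<Sum>i\<le>degree p. coeff p i * X^i)" by (rule poly_altdef)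
  also have "\<dots> = (\<Sum>i\<le>N. coeff p i * X^i)"
    by (rule sum.mono_neutral_left) (use d in \<open>auto simp: coeff_eq_0 not_le\<close>)
  finally show ?thesis .
qed

lemma Gamma_poly: "GammaE n (\<lambda>x. poly (rootpoly n x) X) (\<lambda>x. poly (rootpoly n x) Y) x
   = (\<Sum>k<n. poly (Dp n k x) X * poly (Dp n k x) Y)"
  unfolding GammaE_def by (rule sum.cong) (auto simp: pdiff_polyP)

lemma Gamma_acoef: "GammaE n (acoef n i) (acoef n j) x
   = (\<Sum>k<n. coeff (Dp n k x) i * coeff (Dp n k x) j)"
  unfolding GammaE_def by (rule sum.cong) (auto simp: pdiff_acoef)

lemma part1: "GammaE n (\<lambda>x. poly (rootpoly n x) X) (\<lambda>x. poly (rootpoly n x) Y) x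
        = (\<Sum>i\<le>n. \<Sum>j\<le>n. GammaE n (acoef n i) (acoef n j) x * X ^ i * Y ^ j)"
proof -
  have "(\<Sum>i\<le>n. \<Sum>j\<le>n. GammaE n (acoef n i) (acoef n j) x * X ^ i * Y ^ j)
     = (\<Sum>i\<le>n. \<Sum>j\<le>n. \<Sum>k<n. (coeff (Dp n k x) i * X ^ i) * (coeff (Dp n k x) j * Y ^ j))"
    by (simp add: Gamma_acoef sum_distrib_left sum_distrib_right algebra_simps)
  also have "\<dots> = (\<Sum>k<n. \<Sum>i\<le>n. \<Sum>j\<le>n. (coeff (Dp n k x) i * X ^ i) * (coeff (Dp n k x) j * Y ^ j))"
    by (subst sum.swap, subst (2) sum.swap, rule refl)
  also have "\<dots> = (\<Sum>k<n. poly (Dp n k x) X * poly (Dp n k x) Y)"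
    by (rule sum.cong[OF refl]) (simp add: poly_sum_le[OF deg_Dp] sum_product)
  finally show ?thesis by (simp add: Gamma_poly)
qed

lemma pderiv_rp: "pderiv (rootpoly n x) = (\<Sum>k<n. Dp n k x)"
  unfolding rootpoly_def Dp_def pderiv_prod by (simp add: pderiv_pCons)

lemma part2_mult: "(\<Sum>k<n. poly (Dp n k x) X * poly (Dp n k x) Y) * (Y - X)
   = poly (pderiv (rootpoly n x)) X * poly (rootpoly n x) Y
               - poly (pderiv (rootpoly n x)) Y * poly (rootpoly n x) X"
proof -
  have "(\<Sum>k<n. poly (Dp n k x) X * poly (Dp n k x) Y) * (Y - X)
     = (\<Sum>k<n. poly (Dp n k x) X * poly (rootpoly n x) Y - poly (Dp n k x) Y * poly (rootpoly n x) X)"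
    unfolding sum_distrib_right
    by (rule sum.cong[OF refl]) (simp add: rp_split algebra_simps)
  also have "\<dots> = poly (pderiv (rootpoly n x)) X * poly (rootpoly n x) Y
               - poly (pderiv (rootpoly n x)) Y * poly (rootpoly n x) X"
    by (simp add: pderiv_rp poly_sum sum_subtractf sum_distrib_right)
  finally show ?thesis .
qed

lemma part3_aux: "poly (pderiv (rootpoly n x)) X * poly (rootpoly n x) Y
    = (\<Sum>i\<le>n. \<Sum>j\<le>n. alpha n i j x * X^i * Y^j)"
proof -
  have dP: "degree (pderiv (rootpoly n x)) \<le> n"
    using degree_pderiv[of "rootpoly n x"] rp_deg_coeff[of n x] by simp
  have dQ: "degree (rootpoly n x) \<le> n" using rp_deg_coeff[of n x] by simp
  show ?thesis
    unfolding poly_sum_le[OF dP] poly_sum_le[OF dQ] sum_product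
    by (simp add: alpha_def coeff_pderiv acoef_def algebra_simps)
qed

lemma part3: "X \<noteq> Y \<Longrightarrow> (poly (pderiv (rootpoly n x)) X * poly (rootpoly n x) Y
               - poly (pderiv (rootpoly n x)) Y * poly (rootpoly n x) X) / (Y - X)
            = (\<Sum>i\<le>n. \<Sum>j\<in>{..n} - {i}.
                 alpha n i j x * (X ^ i * Y ^ j - X ^ j * Y ^ i) / (Y - X))"
proof -
  have "(\<Sum>i\<le>n. \<Sum>j\<in>{..n} - {i}. alpha n i j x * (X ^ i * Y ^ j - X ^ j * Y ^ i) / (Y - X))
      = (\<Sum>i\<le>n. \<Sum>j\<le>n. alpha n i j x * (X ^ i * Y ^ j - X ^ j * Y ^ i) / (Y - X))"
  proof (rule sum.cong[OF refl])
    fix i assume "i \<in> {..n}"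
    then show "(\<Sum>j\<in>{..n} - {i}. alpha n i j x * (X ^ i * Y ^ j - X ^ j * Y ^ i) / (Y - X))
      = (\<Sum>j\<le>n. alpha n i j x * (X ^ i * Y ^ j - X ^ j * Y ^ i) / (Y - X))"
      by (subst (2) sum.remove[of _ i]) (auto simp: mult.commute)
  qed
  also have "\<dots> = ((\<Sum>i\<le>n. \<Sum>j\<le>n. alpha n i j x * X^i * Y^j) - (\<Sum>i\<le>n. \<Sum>j\<le>n. alpha n i j x * Y^i * X^j)) / (Y - X)"
    by (simp add: sum_divide_distrib sum_subtractf[symmetric] algebra_simps)
  finally show ?thesis using part3_aux[of n x X Y] part3_aux[of n x Y X] by simp
qed



definition bet :: "(nat \<Rightarrow> real) \<Rightarrow> nat \<Rightarrow> nat \<Rightarrow> real" where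
  "bet a i j = real (i+1) * a (i+1) * a j - real (j+1) * a (j+1) * a i"

definition Hs :: "(nat \<Rightarrow> real) \<Rightarrow> nat \<Rightarrow> nat \<Rightarrow> real" where
  "Hs a k p = (\<Sum>l\<le>k. bet a (k-l) (p+1+l))"

lemma Hs_0: "Hs a 0 p = bet a 0 (p+1)" by (simp add: Hs_def)
lemma Hs_Suc: "Hs a (Suc k) p = Hs a k (p+1) + bet a (Suc k) (p+1)"
  unfolding Hs_def by (subst sum.atMost_Suc_shift) (simp add: add.commute)

lemma acoef_split: "m < n \<Longrightarrow> acoef n i x = coeff (pCons 0 (Dp n m x)) i - x m * coeff (Dp n m x) i"
  by (simp add: acoef_def rp_split mult_pCons_left)

lemma sum_d: "(\<Sum>m<n. coeff (Dp n m x) i) = real (i+1) * acoef n (i+1) x"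
proof -
  have "(\<Sum>m<n. coeff (Dp n m x) i) = coeff (pderiv (rootpoly n x)) i"
    by (simp add: pderiv_rp coeff_sum)
  then show ?thesis by (simp add: coeff_pderiv acoef_def)
qed

lemma G_rec: "GammaE n (acoef n k) (acoef n p) x
   = (\<Sum>m<n. coeff (pCons 0 (Dp n m x)) k * coeff (Dp n m x) (p+1)) + bet (\<lambda>i. acoef n i x) k (p+1)"
proof -
  have "GammaE n (acoef n k) (acoef n p) x = (\<Sum>m<n. coeff (Dp n m x) k * coeff (Dp n m x) p)"
    by (rule Gamma_acoef)
  also have "\<dots> = (\<Sum>m<n. coeff (pCons 0 (Dp n m x)) k * coeff (Dp n m x) (p+1)
        + acoef n (p+1) x * coeff (Dp n m x) k - acoef n k x * coeff (Dp n m x) (p+1))"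
  proof (rule sum.cong[OF refl])
    fix m assume "m \<in> {..<n}"
    then have m: "m < n" by simp
    have e1: "acoef n k x = coeff (pCons 0 (Dp n m x)) k - x m * coeff (Dp n m x) k"
      by (rule acoef_split[OF m])
    have e2: "acoef n (p+1) x = coeff (Dp n m x) p - x m * coeff (Dp n m x) (p+1)"
      using acoef_split[OF m, of "p+1" x] by simp
    show "coeff (Dp n m x) k * coeff (Dp n m x) p = coeff (pCons 0 (Dp n m x)) k * coeff (Dp n m x) (p+1)
        + acoef n (p+1) x * coeff (Dp n m x) k - acoef n k x * coeff (Dp n m x) (p+1)"
      unfolding e1 e2 by (simp add: algebra_simps)
  qed
  also have "\<dots> = (\<Sum>m<n. coeff (pCons 0 (Dp n m x)) k * coeff (Dp n m x) (p+1))
        + acoef n (p+1) x * (\<Sum>m<n. coeff (Dp n m x) k) - acoef n k x * (\<Sum>m<n. coeff (Dp n m x) (p+1))"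
    by (simp add: sum.distrib sum_subtractf sum_distrib_left)
  also have "\<dots> = (\<Sum>m<n. coeff (pCons 0 (Dp n m x)) k * coeff (Dp n m x) (p+1)) + bet (\<lambda>i. acoef n i x) k (p+1)"
    unfolding sum_d bet_def by (simp add: algebra_simps)
  finally show ?thesis .
qed

lemma G_Hs: "GammaE n (acoef n k) (acoef n p) x = Hs (\<lambda>i. acoef n i x) k p"
proof (induction k arbitrary: p)
  case 0
  then show ?case by (simp add: G_rec Hs_0)
next
  case (Suc k)
  have "GammaE n (acoef n (Suc k)) (acoef n p) x
      = GammaE n (acoef n k) (acoef n (p+1)) x + bet (\<lambda>i. acoef n i x) (Suc k) (p+1)"
    unfolding G_rec[of n "Suc k" p x] coeff_pCons_Suc Gamma_acoef[of n k "p+1" x] by simp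
  then show ?case using Suc by (simp add: Hs_Suc)
qed



definition mon :: "nat \<Rightarrow> (nat \<Rightarrow> nat) \<Rightarrow> (nat \<Rightarrow> real) \<Rightarrow> real" where
  "mon n e y = (\<Prod>i<n. y i ^ e i)"

lemma mpoly_fun_mon: "mpoly_fun n Q \<longleftrightarrow> (\<exists>S c. finite S \<and> (\<forall>y. Q y = (\<Sum>e\<in>S. c e * mon n e y)))"
  unfolding mpoly_fun_def mon_def by simp

lemma mp_const: "mpoly_fun n (\<lambda>y. c)"
  unfolding mpoly_fun_mon
  by (rule exI[of _ "{\<lambda>i. 0}"], rule exI[of _ "\<lambda>_. c"]) (simp add: mon_def)

lemma mp_var: "i < n \<Longrightarrow> mpoly_fun n (\<lambda>y. y i)"
  unfolding mpoly_fun_mon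
proof (rule exI[of _ "{\<lambda>j. if j = i then 1 else 0}"], rule exI[of _ "\<lambda>_. 1"], intro conjI allI)
  fix y assume i: "i < n"
  have "mon n (\<lambda>j. if j = i then 1 else 0) y = (\<Prod>j<n. if j = i then y j else 1)"
    unfolding mon_def by (rule prod.cong) auto
  also have "\<dots> = y i" using i by (simp add: prod.delta')
  finally show "y i = (\<Sum>e\<in>{\<lambda>j. if j = i then 1 else 0}. 1 * mon n e y)" by simp
qed simp

lemma sum_if_sub: "finite T \<Longrightarrow> S \<subseteq> T \<Longrightarrow> (\<Sum>e\<in>T. if e\<in>S then g e else (0::real)) = sum g S"
  using sum.inter_restrict[of T g S] by (simp add: Int_absorb1)

lemma mp_add: "mpoly_fun n Q \<Longrightarrow> mpoly_fun n R \<Longrightarrow> mpoly_fun n (\<lambda>y. Q y + R y)"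
proof -
  assume "mpoly_fun n Q" "mpoly_fun n R"
  then obtain S1 c1 S2 c2 where f: "finite S1" "finite S2"
    and q: "\<And>y. Q y = (\<Sum>e\<in>S1. c1 e * mon n e y)" and r: "\<And>y. R y = (\<Sum>e\<in>S2. c2 e * mon n e y)"
    unfolding mpoly_fun_mon by blast
  show ?thesis unfolding mpoly_fun_mon
  proof (rule exI[of _ "S1 \<union> S2"], rule exI[of _ "\<lambda>e. (if e \<in> S1 then c1 e else 0) + (if e \<in> S2 then c2 e else 0)"], intro conjI allI)
    fix y
    have "(\<Sum>e\<in>S1 \<union> S2. ((if e \<in> S1 then c1 e else 0) + (if e \<in> S2 then c2 e else 0)) * mon n e y)
       = (\<Sum>e\<in>S1 \<union> S2. (if e \<in> S1 then c1 e * mon n e y else 0)) + (\<Sum>e\<in>S1 \<union> S2. (if e \<in> S2 then c2 e * mon n e y else 0))"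
      by (simp add: sum.distrib[symmetric]) (rule sum.cong, auto simp: algebra_simps)
    also have "\<dots> = Q y + R y"
      unfolding q r using f by (simp add: sum_if_sub)
    finally show "Q y + R y = (\<Sum>e\<in>S1 \<union> S2. ((if e \<in> S1 then c1 e else 0) + (if e \<in> S2 then c2 e else 0)) * mon n e y)" by simp
  qed (use f in auto)
qed

lemma mp_scale: "mpoly_fun n Q \<Longrightarrow> mpoly_fun n (\<lambda>y. c * Q y)"
proof -
  assume "mpoly_fun n Q"
  then obtain S1 c1 where f: "finite S1" and q: "\<And>y. Q y = (\<Sum>e\<in>S1. c1 e * mon n e y)"
    unfolding mpoly_fun_mon by blast
  show ?thesis unfolding mpoly_fun_mon
    by (rule exI[of _ S1], rule exI[of _ "\<lambda>e. c * c1 e"]) (simp add: f q sum_distrib_left mult.assoc)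
qed

lemma mp_monmult: "mpoly_fun n Q \<Longrightarrow> mpoly_fun n (\<lambda>y. mon n f y * Q y)"
proof -
  assume "mpoly_fun n Q"
  then obtain S1 c1 where f: "finite S1" and q: "\<And>y. Q y = (\<Sum>e\<in>S1. c1 e * mon n e y)"
    unfolding mpoly_fun_mon by blast
  define h where "h = (\<lambda>e j. f j + (e j::nat))"
  have inj: "inj_on h S1" unfolding h_def inj_on_def by (auto simp: fun_eq_iff)
  show ?thesis unfolding mpoly_fun_mon
  proof (rule exI[of _ "h ` S1"], rule exI[of _ "\<lambda>g. c1 (\<lambda>j. g j - f j)"], intro conjI allI)
    fix y
    have "(\<Sum>g\<in>h ` S1. c1 (\<lambda>j. g j - f j) * mon n g y) = (\<Sum>e\<in>S1. c1 (\<lambda>j. h e j - f j) * mon n (h e) y)"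
      by (subst sum.reindex[OF inj]) simp
    also have "\<dots> = (\<Sum>e\<in>S1. mon n f y * (c1 e * mon n e y))"
      by (rule sum.cong) (simp_all add: h_def mon_def power_add prod.distrib)
    finally show "mon n f y * Q y = (\<Sum>g\<in>h ` S1. c1 (\<lambda>j. g j - f j) * mon n g y)"
      by (simp add: q sum_distrib_left)
  qed (use f in auto)
qed

lemma mp_sum: "finite A \<Longrightarrow> (\<And>a. a \<in> A \<Longrightarrow> mpoly_fun n (F a)) \<Longrightarrow> mpoly_fun n (\<lambda>y. \<Sum>a\<in>A. F a y)"
proof (induction A rule: finite_induct)
  case empty then show ?case using mp_const[of n 0] by simp
next
  case (insert a A)
  then show ?case using mp_add[of n "F a" "\<lambda>y. \<Sum>a\<in>A. F a y"] by simp
qed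

lemma mp_mult: "mpoly_fun n Q \<Longrightarrow> mpoly_fun n R \<Longrightarrow> mpoly_fun n (\<lambda>y. Q y * R y)"
proof -
  assume "mpoly_fun n Q" and R: "mpoly_fun n R"
  then obtain S1 c1 where f: "finite S1" and q: "\<And>y. Q y = (\<Sum>e\<in>S1. c1 e * mon n e y)"
    unfolding mpoly_fun_mon by blast
  have "mpoly_fun n (\<lambda>y. \<Sum>e\<in>S1. c1 e * (mon n e y * R y))"
    by (rule mp_sum[OF f]) (intro mp_scale mp_monmult R)
  then show ?thesis by (simp add: q sum_distrib_right mult.assoc)
qed

lemma mp_diff: "mpoly_fun n Q \<Longrightarrow> mpoly_fun n R \<Longrightarrow> mpoly_fun n (\<lambda>y. Q y - R y)"
  using mp_add[of n Q "\<lambda>y. (-1) * R y"] mp_scale[of n R "-1"] by simp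

definition Aof :: "nat \<Rightarrow> (nat \<Rightarrow> real) \<Rightarrow> nat \<Rightarrow> real" where
  "Aof n y i = (if i < n then y i else if i = n then 1 else 0)"

lemma mp_Aof: "mpoly_fun n (\<lambda>y. Aof n y i)"
  unfolding Aof_def by (cases "i < n") (auto intro: mp_var mp_const)

lemma acoef_Aof: "acoef n i x = Aof n (avec n x) i"
  unfolding Aof_def avec_def by (auto simp: acoef_n acoef_gt)

definition Hp :: "nat \<Rightarrow> nat \<Rightarrow> nat \<Rightarrow> (nat \<Rightarrow> real) \<Rightarrow> real" where
  "Hp n k p y = Hs (Aof n y) k p"

lemma mp_Hp: "mpoly_fun n (Hp n k p)"
proof -
  have "mpoly_fun n (\<lambda>y. \<Sum>l\<le>k. bet (Aof n y) (k-l) (p+1+l))"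
    unfolding bet_def
    by (intro mp_sum mp_diff mp_mult mp_scale mp_Aof) auto
  then show ?thesis unfolding Hp_def Hs_def by (simp add: mult.assoc)
qed

lemma G_Hp: "GammaE n (acoef n k) (acoef n p) x = Hp n k p (avec n x)"
proof -
  have "(\<lambda>i. acoef n i x) = Aof n (avec n x)" by (rule ext) (rule acoef_Aof)
  then show ?thesis unfolding G_Hs Hp_def by simp
qed



lemma mon_upd: "m < n \<Longrightarrow> mon n e (y(m:=t)) = (\<Prod>i\<in>{..<n}-{m}. y i ^ e i) * t ^ e m"
proof -
  assume m: "m < n"
  have "mon n e (y(m:=t)) = (y(m:=t)) m ^ e m * (\<Prod>i\<in>{..<n}-{m}. (y(m:=t)) i ^ e i)"
    unfolding mon_def using m by (simp add: prod.remove)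
  also have "(\<Prod>i\<in>{..<n}-{m}. (y(m:=t)) i ^ e i) = (\<Prod>i\<in>{..<n}-{m}. y i ^ e i)"
    by (rule prod.cong) auto
  finally show ?thesis by (metis (no_types) fun_upd_same mult.commute)
qed

lemma mp_line: "mpoly_fun n Q \<Longrightarrow> m < n \<Longrightarrow> \<exists>p::real poly. \<forall>t. Q (y(m:=t)) = poly p t"
proof -
  assume "mpoly_fun n Q" and m: "m < n"
  then obtain S c where f: "finite S" and q: "\<And>y. Q y = (\<Sum>e\<in>S. c e * mon n e y)"
    unfolding mpoly_fun_mon by blast
  show ?thesis
    by (rule exI[of _ "\<Sum>e\<in>S. monom (c e * (\<Prod>i\<in>{..<n}-{m}. y i ^ e i)) (e m)"])
       (simp add: q mon_upd[OF m] poly_sum poly_monom mult.assoc)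
qed

lemma poly_zero_on_infinite: "infinite A \<Longrightarrow> (\<And>t. t \<in> A \<Longrightarrow> poly (p::real poly) t = 0) \<Longrightarrow> p = 0"
proof (rule ccontr)
  assume inf: "infinite A" and z: "\<And>t. t \<in> A \<Longrightarrow> poly p t = 0" and nz: "p \<noteq> 0"
  have "A \<subseteq> {x. poly p x = 0}" using z by auto
  then show False using poly_roots_finite[OF nz] inf finite_subset by blast
qed

lemma mp_box_zero:
  assumes Q: "mpoly_fun n Q" and d: "\<delta> > 0"
    and z: "\<And>y. (\<forall>i<n. \<bar>y i - c i\<bar> < \<delta>) \<Longrightarrow> Q y = 0"
  shows "Q y = 0"
proof -
  have "\<forall>y. (\<forall>i. m \<le> i \<and> i < n \<longrightarrow> \<bar>y i - c i\<bar> < \<delta>) \<longrightarrow> Q y = 0" if "m \<le> n" for m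
    using that
  proof (induction m)
    case 0 then show ?case using z by auto
  next
    case (Suc m)
    show ?case
    proof (intro allI impI)
      fix y assume hy: "\<forall>i. Suc m \<le> i \<and> i < n \<longrightarrow> \<bar>y i - c i\<bar> < \<delta>"
      have m: "m < n" using Suc by simp
      obtain p where p: "\<And>t. Q (y(m:=t)) = poly p t" using mp_line[OF Q m, of y] by blast
      have "p = 0"
      proof (rule poly_zero_on_infinite[of "{c m - \<delta><..<c m + \<delta>}"])
        show "infinite {c m - \<delta><..<c m + \<delta>}" using d by simp
        fix t assume t: "t \<in> {c m - \<delta><..<c m + \<delta>}"
        have "\<forall>i. m \<le> i \<and> i < n \<longrightarrow> \<bar>(y(m:=t)) i - c i\<bar> < \<delta>"
          using hy t by (auto simp: abs_less_iff)
        then have "Q (y(m:=t)) = 0" using Suc by auto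
        then show "poly p t = 0" using p by simp
      qed
      then show "Q y = 0" using p[of "y m"] by simp
    qed
  qed
  from this[of n] show ?thesis by simp
qed



definition Pv :: "nat \<Rightarrow> (nat \<Rightarrow> real) \<Rightarrow> real poly" where
  "Pv n y = (\<Sum>i\<le>n. monom (Aof n y i) i)"

lemma coeff_Pv: "coeff (Pv n y) i = Aof n y i"
  unfolding Pv_def coeff_sum coeff_monom
  by (cases "i \<le> n") (auto simp: Aof_def)

lemma poly_Pv: "poly (Pv n y) s = (\<Sum>i\<le>n. Aof n y i * s^i)"
  unfolding Pv_def by (simp add: poly_sum poly_monom)

lemma deg_Pv: "degree (Pv n y) \<le> n"
  by (rule degree_le) (auto simp: coeff_Pv Aof_def)

lemma Pv_rp: "Pv n (avec n x) = rootpoly n x"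
  by (rule poly_eqI) (simp add: coeff_Pv acoef_Aof[symmetric] acoef_def)

lemma poly_rp: "poly (rootpoly n x) z = (\<Prod>i<n. z - x i)"
  unfolding rootpoly_def by (simp add: poly_prod)

lemma half_dist: "\<bar>real j - 1/2 - real i\<bar> \<ge> 1/2"
  by (cases "j \<le> i") auto

lemma P0_bound: "\<bar>poly (rootpoly n real) (real j - 1/2)\<bar> \<ge> (1/2)^n"
proof -
  have "(1/2::real)^n = (\<Prod>i<n. 1/2)" by simp
  also have "\<dots> \<le> (\<Prod>i<n. \<bar>real j - 1/2 - real i\<bar>)"
    by (rule prod_mono) (use half_dist in auto)
  also have "\<dots> = \<bar>poly (rootpoly n real) (real j - 1/2)\<bar>"
    by (simp add: poly_rp abs_prod)
  finally show ?thesis .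
qed

lemma P0_sign: "j < n \<Longrightarrow> poly (rootpoly n real) (real j - 1/2) * poly (rootpoly n real) (real (Suc j) - 1/2) < 0"
proof -
  assume j: "j < n"
  have "poly (rootpoly n real) (real j - 1/2) * poly (rootpoly n real) (real (Suc j) - 1/2)
     = (\<Prod>i<n. (real j - 1/2 - real i) * (real j + 1/2 - real i))"
    by (simp add: poly_rp prod.distrib[symmetric] algebra_simps)
  also have "\<dots> = ((real j - 1/2 - real j) * (real j + 1/2 - real j)) *
      (\<Prod>i\<in>{..<n}-{j}. (real j - 1/2 - real i) * (real j + 1/2 - real i))"
    using j by (simp add: prod.remove)
  also have "\<dots> < 0"
  proof (rule mult_neg_pos)
    show "(real j - 1/2 - real j) * (real j + 1/2 - real j) < 0" by simp
    show "0 < (\<Prod>i\<in>{..<n}-{j}. (real j - 1/2 - real i) * (real j + 1/2 - real i))"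
    proof (rule prod_pos)
      fix i assume "i \<in> {..<n}-{j}"
      then have "i \<noteq> j" by simp
      then have "i < j \<or> j < i" by auto
      then show "0 < (real j - 1/2 - real i) * (real j + 1/2 - real i)"
      proof
        assume "i < j" then have "real i + 1 \<le> real j" by simp
        then show ?thesis by (intro mult_pos_pos) auto
      next
        assume "j < i" then have "real j + 1 \<le> real i" by simp
        then show ?thesis by (intro mult_neg_neg) auto
      qed
    qed
  qed
  finally show ?thesis .
qed

lemma close_bound:
  assumes "\<forall>i<n. \<bar>y i - c i\<bar> < \<delta>" "0 \<le> \<delta>" "\<bar>s\<bar> \<le> real n + 1"
  shows "\<bar>poly (Pv n y) s - poly (Pv n c) s\<bar> \<le> \<delta> * (real n + 1)^(n+1)"
proof -
  have "\<bar>poly (Pv n y) s - poly (Pv n c) s\<bar> = \<bar>\<Sum>i\<le>n. (Aof n y i - Aof n c i) * s^i\<bar>"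
    by (simp add: poly_Pv sum_subtractf[symmetric] algebra_simps)
  also have "\<dots> \<le> (\<Sum>i\<le>n. \<bar>(Aof n y i - Aof n c i) * s^i\<bar>)" by (rule sum_abs)
  also have "\<dots> \<le> (\<Sum>i\<le>n. \<delta> * (real n + 1)^n)"
  proof (rule sum_mono)
    fix i assume i: "i \<in> {..n}"
    have a: "\<bar>Aof n y i - Aof n c i\<bar> \<le> \<delta>"
      using assms(1,2) by (cases "i < n") (auto simp: Aof_def less_imp_le)
    have "\<bar>s\<bar>^i \<le> (real n + 1)^i" by (rule power_mono) (use assms(3) in auto)
    also have "\<dots> \<le> (real n + 1)^n" by (rule power_increasing) (use i in auto)
    finally have b: "\<bar>s\<bar>^i \<le> (real n + 1)^n" .
    show "\<bar>(Aof n y i - Aof n c i) * s^i\<bar> \<le> \<delta> * (real n + 1)^n"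
      unfolding abs_mult power_abs by (rule mult_mono) (use a b assms(2) in auto)
  qed
  also have "\<dots> = \<delta> * (real n + 1)^(n+1)" by (simp add: algebra_simps)
  finally show ?thesis .
qed

lemma sign_close: "\<bar>a' - a\<bar> < \<bar>a::real\<bar> \<Longrightarrow> a * a' > 0"
  by (cases "a > 0") (auto simp: abs_less_iff mult_pos_pos mult_neg_neg abs_if split: if_splits)

lemma sign_prop: "(a::real) * b < 0 \<Longrightarrow> a * a' > 0 \<Longrightarrow> b * b' > 0 \<Longrightarrow> a' * b' < 0"
  by (auto simp: mult_less_0_iff zero_less_mult_iff)

lemma box_in_image:
  "\<exists>c \<delta>. \<delta> > 0 \<and> (\<forall>y. (\<forall>i<n. \<bar>y i - c i\<bar> < \<delta>) \<longrightarrow> (\<exists>x. \<forall>i<n. avec n x i = y i))"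
proof -
  define c where "c = avec n real"
  define \<delta> where "\<delta> = (1/2::real)^n / (2 * (real n + 1)^(n+1))"
  define s where "s = (\<lambda>j::nat. real j - 1/2)"
  have dpos: "\<delta> > 0" unfolding \<delta>_def by simp
  have P0: "Pv n c = rootpoly n real" unfolding c_def by (rule Pv_rp)
  show ?thesis
  proof (rule exI[of _ c], rule exI[of _ \<delta>], intro conjI allI impI)
    show "\<delta> > 0" by (rule dpos)
    fix y assume y: "\<forall>i<n. \<bar>y i - c i\<bar> < \<delta>"
    have sgn: "poly (Pv n c) (s j) * poly (Pv n y) (s j) > 0" if j: "j \<le> n" for j
    proof (rule sign_close)
      have sj: "\<bar>s j\<bar> \<le> real n + 1" using j unfolding s_def by auto
      have "\<bar>poly (Pv n y) (s j) - poly (Pv n c) (s j)\<bar> \<le> \<delta> * (real n + 1)^(n+1)"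
        by (rule close_bound[OF y _ sj]) (use dpos in simp)
      also have "\<dots> = (1/2)^n / 2" unfolding \<delta>_def by simp
      also have "\<dots> < (1/2)^n" by simp
      also have "\<dots> \<le> \<bar>poly (Pv n c) (s j)\<bar>" unfolding P0 s_def by (rule P0_bound)
      finally show "\<bar>poly (Pv n y) (s j) - poly (Pv n c) (s j)\<bar> < \<bar>poly (Pv n c) (s j)\<bar>" .
    qed
    have "\<forall>j<n. \<exists>r. s j < r \<and> r < s (Suc j) \<and> poly (Pv n y) r = 0"
    proof (intro allI impI)
      fix j assume j: "j < n"
      have "poly (Pv n y) (s j) * poly (Pv n y) (s (Suc j)) < 0"
        by (rule sign_prop[OF _ sgn sgn]) (use j P0_sign[OF j] in \<open>simp_all add: P0 s_def\<close>)
      then show "\<exists>r. s j < r \<and> r < s (Suc j) \<and> poly (Pv n y) r = 0"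
        using poly_IVT[of "s j" "s (Suc j)" "Pv n y"] by (auto simp: s_def)
    qed
    then obtain r where r: "\<And>j. j < n \<Longrightarrow> s j < r j \<and> r j < s (Suc j) \<and> poly (Pv n y) (r j) = 0"
      by metis
    have mono: "r j < r j'" if "j < j'" "j' < n" for j j'
    proof -
      have "r j < s (Suc j)" using r that by auto
      also have "s (Suc j) \<le> s j'" using that unfolding s_def by auto
      also have "s j' < r j'" using r that by auto
      finally show ?thesis .
    qed
    have inj: "inj_on r {..<n}"
      by (rule inj_onI) (metis lessThan_iff linorder_neqE_nat mono order_less_irrefl)
    have eq: "Pv n y = rootpoly n r"
    proof (rule poly_eqI_degree_lead_coeff[where n=n and A="r ` {..<n}"])
      show "coeff (Pv n y) n = coeff (rootpoly n r) n"
        using rp_deg_coeff[of n r] by (simp add: coeff_Pv Aof_def)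
      show "n \<le> card (r ` {..<n})" using card_image[OF inj] by simp
      show "degree (Pv n y) \<le> n" by (rule deg_Pv)
      show "degree (rootpoly n r) \<le> n" using rp_deg_coeff[of n r] by simp
      fix z assume "z \<in> r ` {..<n}"
      then obtain j where j: "j < n" "z = r j" by auto
      have "poly (rootpoly n r) z = 0" unfolding poly_rp using j by (auto intro: prod_zero)
      then show "poly (Pv n y) z = poly (rootpoly n r) z" using r j by simp
    qed
    show "\<exists>x. \<forall>i<n. avec n x i = y i"
    proof (intro exI allI impI)
      fix i assume i: "i < n"
      have "avec n r i = coeff (rootpoly n r) i" using i by (simp add: avec_def acoef_def)
      also have "\<dots> = y i" unfolding eq[symmetric] coeff_Pv using i by (simp add: Aof_def)
      finally show "avec n r i = y i" .
    qed
  qed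
qed



lemma mp_dep: "mpoly_fun n Q \<Longrightarrow> (\<forall>i<n. y i = z i) \<Longrightarrow> Q y = Q z"
proof -
  assume "mpoly_fun n Q" and yz: "\<forall>i<n. y i = z i"
  then obtain S c where q: "\<And>y. Q y = (\<Sum>e\<in>S. c e * mon n e y)"
    unfolding mpoly_fun_mon by blast
  have "\<And>e. mon n e y = mon n e z" unfolding mon_def by (rule prod.cong) (use yz in auto)
  then show ?thesis by (simp add: q)
qed

lemma Q_eq_Hp:
  assumes Q: "mpoly_fun n Q" and h: "\<And>x. Q (avec n x) = Hp n k p (avec n x)"
  shows "Q y = Hp n k p y"
proof -
  have D: "mpoly_fun n (\<lambda>y. Q y - Hp n k p y)" by (rule mp_diff[OF Q mp_Hp])
  obtain c \<delta> where d: "\<delta> > 0" and box: "\<And>y. (\<forall>i<n. \<bar>y i - c i\<bar> < \<delta>) \<Longrightarrow> \<exists>x. \<forall>i<n. avec n x i = y i"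
    using box_in_image[of n] by blast
  have "Q y - Hp n k p y = 0"
  proof (rule mp_box_zero[OF D d])
    fix y' assume "\<forall>i<n. \<bar>y' i - c i\<bar> < \<delta>"
    then obtain x where x: "\<forall>i<n. avec n x i = y' i" using box by blast
    have "Q y' - Hp n k p y' = Q (avec n x) - Hp n k p (avec n x)"
      using mp_dep[OF D, of y' "avec n x"] x by simp
    then show "Q y' - Hp n k p y' = 0" using h by simp
  qed
  then show ?thesis by simp
qed

definition dl :: "nat \<Rightarrow> nat \<Rightarrow> real" where "dl k u = (if u = k then 1 else 0)"

definition dbet :: "(nat \<Rightarrow> real) \<Rightarrow> nat \<Rightarrow> nat \<Rightarrow> nat \<Rightarrow> real" where
  "dbet a k i j = real (i+1) * (dl k (i+1) * a j + a (i+1) * dl k j)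
     - real (j+1) * (dl k (j+1) * a i + a (j+1) * dl k i)"

lemma dvar: "((\<lambda>t. (a(k:=t)) u) has_real_derivative dl k u) (at s)"
  by (cases "u = k") (auto simp: dl_def intro!: derivative_eq_intros)

lemma dbet_deriv: "((\<lambda>t. bet (a(k:=t)) i j) has_real_derivative dbet a k i j) (at (a k))"
  unfolding bet_def dbet_def
  by (rule derivative_eq_intros dvar refl | simp)+ (simp add: algebra_simps)

lemma dHs: "((\<lambda>t. Hs (a(k:=t)) k p) has_real_derivative (\<Sum>l\<le>k. dbet a k (k-l) (p+1+l))) (at (a k))"
  unfolding Hs_def by (rule DERIV_sum) (rule dbet_deriv)

lemma pdiff_Hp: "k < n \<Longrightarrow> pdiff (Hp n k p) k y = (\<Sum>l\<le>k. dbet (Aof n y) k (k-l) (p+1+l))"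
proof -
  assume k: "k < n"
  have "(\<lambda>t. Hp n k p (y(k:=t))) = (\<lambda>t. Hs ((Aof n y)(k:=t)) k p)"
    unfolding Hp_def using k by (intro ext arg_cong[where f="\<lambda>a. Hs a k p"]) (auto simp: Aof_def)
  moreover have "y k = Aof n y k" using k by (simp add: Aof_def)
  ultimately show ?thesis unfolding pdiff_def using dHs[of "Aof n y" k p]
    by (simp add: DERIV_imp_deriv)
qed

lemma sum_single: "c0 \<le> (k::nat) \<Longrightarrow> (\<And>l. l \<le> k \<Longrightarrow> l \<noteq> c0 \<Longrightarrow> g l = (0::real)) \<Longrightarrow> (\<Sum>l\<le>k. g l) = g c0"
  by (subst sum.remove[of _ c0]) (auto intro!: sum.neutral)

definition cc :: "nat \<Rightarrow> nat \<Rightarrow> real" where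
  "cc p k = real k + (if p+1 \<le> k then real (p+2) else 0) - (if p+2 \<le> k then real k else 0) - real (p+2)"

lemma inner_sum: "(\<Sum>l\<le>k. dbet a k (k-l) (p+1+l)) = a (p+2) * cc p k"
proof -
  have T1: "(\<Sum>l\<le>k. real (k-l+1) * dl k (k-l+1) * a (p+1+l)) = real k * a (p+2)"
  proof (cases "k = 0")
    case True then show ?thesis by (simp add: dl_def)
  next
    case False
    then have "(\<Sum>l\<le>k. real (k-l+1) * dl k (k-l+1) * a (p+1+l)) = real (k-1+1) * dl k (k-1+1) * a (p+1+1)"
      by (intro sum_single) (auto simp: dl_def)
    then show ?thesis using False by (simp add: dl_def)
  qed
  have T2: "(\<Sum>l\<le>k. real (k-l+1) * a (k-l+1) * dl k (p+1+l)) = (if p+1 \<le> k then real (p+2) * a (p+2) else 0)"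
  proof (cases "p+1 \<le> k")
    case True
    then have "(\<Sum>l\<le>k. real (k-l+1) * a (k-l+1) * dl k (p+1+l)) = real (k-(k-p-1)+1) * a (k-(k-p-1)+1) * dl k (p+1+(k-p-1))"
      by (intro sum_single) (auto simp: dl_def)
    then show ?thesis using True by (simp add: dl_def numeral_2_eq_2)
  next
    case False then show ?thesis by (auto simp: dl_def intro!: sum.neutral)
  qed
  have T3: "(\<Sum>l\<le>k. real (p+1+l+1) * dl k (p+1+l+1) * a (k-l)) = (if p+2 \<le> k then real k * a (p+2) else 0)"
  proof (cases "p+2 \<le> k")
    case True
    then have "(\<Sum>l\<le>k. real (p+1+l+1) * dl k (p+1+l+1) * a (k-l)) = real (p+1+(k-p-2)+1) * dl k (p+1+(k-p-2)+1) * a (k-(k-p-2))"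
      by (intro sum_single) (auto simp: dl_def)
    then show ?thesis using True by (simp add: dl_def numeral_2_eq_2)
  next
    case False then show ?thesis by (auto simp: dl_def intro!: sum.neutral)
  qed
  have T4: "(\<Sum>l\<le>k. real (p+1+l+1) * a (p+1+l+1) * dl k (k-l)) = real (p+2) * a (p+2)"
  proof -
    have "(\<Sum>l\<le>k. real (p+1+l+1) * a (p+1+l+1) * dl k (k-l)) = real (p+1+0+1) * a (p+1+0+1) * dl k (k-0)"
      by (intro sum_single) (auto simp: dl_def)
    then show ?thesis by (simp add: dl_def numeral_2_eq_2)
  qed
  have "(\<Sum>l\<le>k. dbet a k (k-l) (p+1+l)) =
     (\<Sum>l\<le>k. real (k-l+1) * dl k (k-l+1) * a (p+1+l)) + (\<Sum>l\<le>k. real (k-l+1) * a (k-l+1) * dl k (p+1+l))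
     - (\<Sum>l\<le>k. real (p+1+l+1) * dl k (p+1+l+1) * a (k-l)) - (\<Sum>l\<le>k. real (p+1+l+1) * a (p+1+l+1) * dl k (k-l))"
    unfolding dbet_def by (simp add: sum.distrib sum_subtractf algebra_simps)
  also have "\<dots> = a (p+2) * cc p k"
    unfolding T1 T2 T3 T4 cc_def by (simp add: algebra_simps)
  finally show ?thesis .
qed

lemma gauss_real: "(\<Sum>k<m. real k) = real m * (real m - 1) / 2"
proof (induction m)
  case (Suc m) then show ?case by (simp add: field_simps)
qed simp

lemma cc_sum: "p + 2 \<le> n \<Longrightarrow> (\<Sum>k<n. cc p k) = - (1/2) * real ((p+1)*(p+2))"
proof (induction n rule: dec_induct)
  case base
  have "(\<Sum>k<p+2. cc p k) = (\<Sum>k<p+1. cc p k) + cc p (p+1)" by simp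
  also have "(\<Sum>k<p+1. cc p k) = (\<Sum>k<p+1. real k - real (p+2))"
    by (rule sum.cong) (auto simp: cc_def)
  also have "\<dots> = real (p+1) * (real (p+1) - 1) / 2 - real (p+1) * real (p+2)"
    by (simp add: sum_subtractf gauss_real) (simp add: right_diff_distrib distrib_right)
  finally show ?case by (simp add: cc_def algebra_simps)
next
  case (step m)
  then show ?case by (simp add: cc_def)
qed

lemma final_sum: "p < n \<Longrightarrow>
  (\<Sum>k<n. \<Sum>l\<le>k. dbet (Aof n y) k (k-l) (p+1+l)) = - (1/2) * real ((p+1)*(p+2)) * Aof n y (p+2)"
proof -
  assume p: "p < n"
  have "(\<Sum>k<n. \<Sum>l\<le>k. dbet (Aof n y) k (k-l) (p+1+l)) = Aof n y (p+2) * (\<Sum>k<n. cc p k)"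
    unfolding inner_sum by (simp add: sum_distrib_left)
  also have "\<dots> = - (1/2) * real ((p+1)*(p+2)) * Aof n y (p+2)"
  proof (cases "p + 2 \<le> n")
    case True then show ?thesis by (simp add: cc_sum)
  next
    case False then have "Aof n y (p+2) = 0" using p by (simp add: Aof_def)
    then show ?thesis by simp
  qed
  finally show ?thesis .
qed


theorem mainTheorem3:
  fixes n :: nat
  shows
   "(\<forall>x X Y.
      GammaE n (\<lambda>x. poly (rootpoly n x) X) (\<lambda>x. poly (rootpoly n x) Y) x
        = (\<Sum>i\<le>n. \<Sum>j\<le>n. GammaE n (acoef n i) (acoef n j) x * X ^ i * Y ^ j)
      \<and> (X \<noteq> Y \<longrightarrow>
          (\<Sum>i\<le>n. \<Sum>j\<le>n. GammaE n (acoef n i) (acoef n j) x * X ^ i * Y ^ j)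
            = (poly (pderiv (rootpoly n x)) X * poly (rootpoly n x) Y
               - poly (pderiv (rootpoly n x)) Y * poly (rootpoly n x) X) / (Y - X)
          \<and> (poly (pderiv (rootpoly n x)) X * poly (rootpoly n x) Y
               - poly (pderiv (rootpoly n x)) Y * poly (rootpoly n x) X) / (Y - X)
            = (\<Sum>i\<le>n. \<Sum>j\<in>{..n} - {i}.
                 alpha n i j x * (X ^ i * Y ^ j - X ^ j * Y ^ i) / (Y - X))))
    \<and> (\<forall>k<n. \<forall>p<n. \<exists>Q. mpoly_fun n Q \<and>
          (\<forall>x. GammaE n (acoef n k) (acoef n p) x = Q (avec n x)))
    \<and> (\<forall>Q :: nat \<Rightarrow> nat \<Rightarrow> (nat \<Rightarrow> real) \<Rightarrow> real.
          (\<forall>k<n. \<forall>p<n. mpoly_fun n (Q k p) \<and>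
             (\<forall>x. GammaE n (acoef n k) (acoef n p) x = Q k p (avec n x)))
          \<longrightarrow> (\<forall>x. \<forall>p<n.
                (\<Sum>k<n. pdiff (Q k p) k (avec n x))
                  = - (1/2) * real ((p + 1) * (p + 2)) * acoef n (p + 2) x))"
  proof (intro conjI allI impI)
  fix x X Y
  show "GammaE n (\<lambda>x. poly (rootpoly n x) X) (\<lambda>x. poly (rootpoly n x) Y) x
        = (\<Sum>i\<le>n. \<Sum>j\<le>n. GammaE n (acoef n i) (acoef n j) x * X ^ i * Y ^ j)"
    by (rule part1)
  assume XY: "X \<noteq> Y"
  have "(\<Sum>i\<le>n. \<Sum>j\<le>n. GammaE n (acoef n i) (acoef n j) x * X ^ i * Y ^ j) * (Y - X)
     = poly (pderiv (rootpoly n x)) X * poly (rootpoly n x) Y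
               - poly (pderiv (rootpoly n x)) Y * poly (rootpoly n x) X"
    unfolding part1[symmetric] Gamma_poly by (rule part2_mult)
  moreover have "Y - X \<noteq> 0" using XY by simp
  ultimately show "(\<Sum>i\<le>n. \<Sum>j\<le>n. GammaE n (acoef n i) (acoef n j) x * X ^ i * Y ^ j)
            = (poly (pderiv (rootpoly n x)) X * poly (rootpoly n x) Y
               - poly (pderiv (rootpoly n x)) Y * poly (rootpoly n x) X) / (Y - X)"
    by (simp add: eq_divide_eq)
  show "(poly (pderiv (rootpoly n x)) X * poly (rootpoly n x) Y
               - poly (pderiv (rootpoly n x)) Y * poly (rootpoly n x) X) / (Y - X)
            = (\<Sum>i\<le>n. \<Sum>j\<in>{..n} - {i}.
                 alpha n i j x * (X ^ i * Y ^ j - X ^ j * Y ^ i) / (Y - X))"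
    by (rule part3[OF XY])
next
  fix k p assume "k < n" "p < n"
  show "\<exists>Q. mpoly_fun n Q \<and> (\<forall>x. GammaE n (acoef n k) (acoef n p) x = Q (avec n x))"
    by (rule exI[of _ "Hp n k p"]) (simp add: mp_Hp G_Hp)
next
  fix Q :: "nat \<Rightarrow> nat \<Rightarrow> (nat \<Rightarrow> real) \<Rightarrow> real" and x p
  assume hQ: "\<forall>k<n. \<forall>p<n. mpoly_fun n (Q k p) \<and>
             (\<forall>x. GammaE n (acoef n k) (acoef n p) x = Q k p (avec n x))"
    and p: "p < n"
  have eqQ: "Q k p = Hp n k p" if k: "k < n" for k
  proof (rule ext, rule Q_eq_Hp)
    show "mpoly_fun n (Q k p)" using hQ k p by blast
    fix x show "Q k p (avec n x) = Hp n k p (avec n x)"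
      using hQ k p G_Hp[of n k p x] by metis
  qed
  have "(\<Sum>k<n. pdiff (Q k p) k (avec n x)) = (\<Sum>k<n. \<Sum>l\<le>k. dbet (Aof n (avec n x)) k (k-l) (p+1+l))"
    by (rule sum.cong) (auto simp: eqQ pdiff_Hp)
  also have "\<dots> = - (1/2) * real ((p+1)*(p+2)) * Aof n (avec n x) (p+2)"
    by (rule final_sum[OF p])
  finally show "(\<Sum>k<n. pdiff (Q k p) k (avec n x))
                  = - (1/2) * real ((p + 1) * (p + 2)) * acoef n (p + 2) x"
    by (simp add: acoef_Aof)
qed

end
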